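(* Let $k>1$ and let $f:\mathbb{R}\to\mathbb{R}$ be a positive, continuously differentiable function. Then the planar system $$\frac{dI}{d\tau}=I\,[f(R)(1-I-R)-k],\qquad \frac{dR}{d\tau}=(k-1)I-R$$ has no non-constant periodic solution $(I(\tau),R(\tau))$ with $I(\tau)>0$ for all $\tau$. *)

theory Defs
  imports "HOL-Analysis.Analysis"
begin

end

theory Submission
  imports Defs "HOL-Analysis.Analysis"
begin

lemma antideriv_exists:
  fixes g :: "real \<Rightarrow> real"
  assumes "\<And>x. isCont g x"
  shows "\<exists>G. \<forall>x. (G has_real_derivative g x) (at x)"
proof -
  have "\<exists>F. \<forall>x :: real. (-\<infinity>::ereal) < x \<longrightarrow> x < (\<infinity>::ereal) \<longrightarrow> (F has_vector_derivative g x) (at x)"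
    by (rule einterval_antiderivative) (auto simp: assms)
  then show ?thesis
    by (auto simp: has_real_derivative_iff_has_vector_derivative)
qed

lemma ln_diff_sign:
  fixes a b :: real
  assumes "a > 0" "b > 0"
  shows "(a - b) * (ln a - ln b) \<ge> 0"
proof (cases "a \<le> b")
  case True
  then have "ln a \<le> ln b" using assms by simp
  then show ?thesis using True by (simp add: mult_nonpos_nonpos)
next
  case False
  then have "ln a \<ge> ln b" using assms by simp
  then show ?thesis using False by simp
qed

lemma alg:
  fixes y r F k L1 L2 :: real
  assumes "y \<noteq> 0" "r \<noteq> 0" "k - 1 \<noteq> 0"
  shows "y * (F * (1 - y / (k - 1) - r) - k) - (y - r) - ((y - r) * L1 + r * (inverse y * (y * (F * (1 - y / (k - 1) - r) - k))))
        + ((y - r) * L2 + r * (inverse r * (y - r))) - (F * (1 - k * r / (k - 1)) - k) * (y - r)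
       = - F * (y - r)^2 / (k - 1) - (y - r) * (L1 - L2)"
proof -
  define P where "P = F * (1 - y / (k - 1) - r) - k"
  define gR where "gR = F * (1 - k * r / (k - 1)) - k"
  have e1: "r * (inverse y * (y * P)) = r * P" using assms by simp
  have e2: "r * (inverse r * (y - r)) = y - r" using assms by simp
  have e3: "P - gR = - F * (y - r) / (k - 1)"
  proof -
    have "P - gR = F * (k * r / (k - 1) - y / (k - 1) - r)" unfolding P_def gR_def by (simp add: algebra_simps)
    also have "k * r / (k - 1) - y / (k - 1) - r = (r - y) / (k - 1)"
    proof -
      have "(k*r - y - (k-1)*r)/(k-1) = k*r/(k-1) - y/(k-1) - (k-1)*r/(k-1)" by (simp add: diff_divide_distrib)
      also have "(k-1)*r/(k-1) = r" using assms(3) by simp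
      also have "k*r - y - (k-1)*r = r - y" by (simp add: algebra_simps)
      finally show ?thesis by simp
    qed
    finally show ?thesis by (simp add: algebra_simps)
  qed
  have "y * P - (y - r) - ((y - r) * L1 + r * (inverse y * (y * P))) + ((y - r) * L2 + r * (inverse r * (y - r))) - gR * (y - r)
      = (y - r) * (P - gR) - (y - r) * (L1 - L2)" unfolding e1 e2 by (simp add: algebra_simps)
  also have "\<dots> = - F * (y - r)^2 / (k - 1) - (y - r) * (L1 - L2)" unfolding e3 by (simp add: power2_eq_square)
  finally show ?thesis unfolding P_def gR_def .
qed

theorem lemma2:
  fixes k :: real and f f' :: "real \<Rightarrow> real"
  assumes k: "k > 1"
    and f_pos: "\<forall>x. f x > 0"
    and f_deriv: "\<forall>x. (f has_real_derivative f' x) (at x)"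
    and f'_cont: "continuous_on UNIV f'"
  shows "\<not> (\<exists>(I :: real \<Rightarrow> real) (R :: real \<Rightarrow> real) (T :: real).
            T > 0
          \<and> (\<forall>\<tau>. (I has_real_derivative I \<tau> * (f (R \<tau>) * (1 - I \<tau> - R \<tau>) - k)) (at \<tau>))
          \<and> (\<forall>\<tau>. (R has_real_derivative (k - 1) * I \<tau> - R \<tau>) (at \<tau>))
          \<and> (\<forall>\<tau>. I (\<tau> + T) = I \<tau> \<and> R (\<tau> + T) = R \<tau>)
          \<and> (\<forall>\<tau>. I \<tau> > 0)
          \<and> \<not> (\<exists>c d. \<forall>\<tau>. I \<tau> = c \<and> R \<tau> = d))"
proof
  assume "\<exists>(I :: real \<Rightarrow> real) (R :: real \<Rightarrow> real) (T :: real).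
            T > 0
          \<and> (\<forall>\<tau>. (I has_real_derivative I \<tau> * (f (R \<tau>) * (1 - I \<tau> - R \<tau>) - k)) (at \<tau>))
          \<and> (\<forall>\<tau>. (R has_real_derivative (k - 1) * I \<tau> - R \<tau>) (at \<tau>))
          \<and> (\<forall>\<tau>. I (\<tau> + T) = I \<tau> \<and> R (\<tau> + T) = R \<tau>)
          \<and> (\<forall>\<tau>. I \<tau> > 0)
          \<and> \<not> (\<exists>c d. \<forall>\<tau>. I \<tau> = c \<and> R \<tau> = d)"
  then obtain I R T where T: "T > 0"
    and dI: "\<And>t. (I has_real_derivative I t * (f (R t) * (1 - I t - R t) - k)) (at t)"
    and dR: "\<And>t. (R has_real_derivative (k - 1) * I t - R t) (at t)"
    and per: "\<And>t. I (t + T) = I t" "\<And>t. R (t + T) = R t"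
    and Ipos: "\<And>t. I t > 0"
    and nc: "\<not> (\<exists>c d. \<forall>\<tau>. I \<tau> = c \<and> R \<tau> = d)"
    by blast
  have fcont: "\<And>x. isCont f x" using f_deriv DERIV_isCont by blast
  have Rpos: "R t > 0" for t
  proof -
    have d: "((\<lambda>s. R s * exp s) has_real_derivative ((k - 1) * I s) * exp s) (at s)" for s
    proof -
      have "((\<lambda>s. R s * exp s) has_real_derivative ((k - 1) * I s - R s) * exp s + R s * exp s) (at s)"
        by (auto intro!: derivative_eq_intros dR)
      then show ?thesis by (simp add: algebra_simps)
    qed
    have "(\<lambda>s. R s * exp s) t < (\<lambda>s. R s * exp s) (t + T)"
    proof (rule DERIV_pos_imp_increasing[where f="\<lambda>s. R s * exp s"])
      show "t < t + T" using T by simp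
      fix x show "\<exists>y. ((\<lambda>s. R s * exp s) has_real_derivative y) (at x) \<and> y > 0"
        using d[of x] Ipos[of x] k by (intro exI[of _ "(k - 1) * I x * exp x"]) auto
    qed
    then have "R t * exp t < R t * (exp t * exp T)" using per(2)[of t] by (simp add: exp_add)
    then have "(R t * 1) * exp t < (R t * exp T) * exp t" by (simp add: algebra_simps)
    then have "R t * 1 < R t * exp T" using mult_less_cancel_right_pos[OF exp_gt_zero[of t]] by blast
    have "exp T > 1" using T by simp
    show ?thesis
    proof (rule ccontr)
      assume "\<not> R t > 0"
      then have "exp T * R t \<le> 1 * R t" using \<open>exp T > 1\<close> by (intro mult_right_mono_neg) auto
      with \<open>R t * 1 < R t * exp T\<close> show False by (simp add: mult.commute)
    qed
  qed
  define g where "g s = f s * (1 - k * s / (k - 1)) - k" for s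
  have gcont: "isCont g x" for x
    unfolding g_def using k by (intro continuous_intros fcont) auto
  obtain G where dG: "\<And>x. (G has_real_derivative g x) (at x)"
    using antideriv_exists[OF gcont] by blast
  define y where "y t = (k - 1) * I t" for t
  have ypos: "y t > 0" for t unfolding y_def using Ipos[of t] k by simp
  define V where "V t = y t - R t - R t * ln (y t) + R t * ln (R t) - G (R t)" for t
  define D where "D t = - f (R t) * (y t - R t)^2 / (k - 1) - (y t - R t) * (ln (y t) - ln (R t))" for t
  have dy: "(y has_real_derivative y t * (f (R t) * (1 - I t - R t) - k)) (at t)" for t
    unfolding y_def using DERIV_cmult[OF dI[of t], of "k - 1"] by (simp add: algebra_simps)
  have dR': "(R has_real_derivative y t - R t) (at t)" for t
    using dR[of t] by (simp add: y_def)
  have dV: "(V has_real_derivative D t) (at t)" for t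
  proof -
    let ?P = "f (R t) * (1 - I t - R t) - k"
    have a1: "((\<lambda>s. R s * ln (y s)) has_real_derivative
        (y t - R t) * ln (y t) + R t * (inverse (y t) * (y t * ?P))) (at t)"
      by (subst mult.commute[of "R t"]) (rule DERIV_mult[OF dR' DERIV_chain2[OF DERIV_ln[OF ypos] dy]])
    have a2: "((\<lambda>s. R s * ln (R s)) has_real_derivative
        (y t - R t) * ln (R t) + R t * (inverse (R t) * (y t - R t))) (at t)"
      by (subst mult.commute[of "R t"]) (rule DERIV_mult[OF dR' DERIV_chain2[OF DERIV_ln[OF Rpos] dR']])
    have a3: "((\<lambda>s. G (R s)) has_real_derivative g (R t) * (y t - R t)) (at t)"
      by (rule DERIV_chain2[OF dG dR'])
    have "(V has_real_derivative
        y t * ?P - (y t - R t) - ((y t - R t) * ln (y t) + R t * (inverse (y t) * (y t * ?P)))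
        + ((y t - R t) * ln (R t) + R t * (inverse (R t) * (y t - R t))) - g (R t) * (y t - R t)) (at t)"
      unfolding V_def[abs_def]
      by (intro DERIV_diff DERIV_add dy dR' a1 a2 a3)
    moreover have "y t * ?P - (y t - R t) - ((y t - R t) * ln (y t) + R t * (inverse (y t) * (y t * ?P)))
        + ((y t - R t) * ln (R t) + R t * (inverse (R t) * (y t - R t))) - g (R t) * (y t - R t) = D t"
    proof -
      have yR: "y t \<noteq> 0" "R t \<noteq> 0" using ypos[of t] Rpos[of t] by auto
      have kk: "k - 1 \<noteq> 0" using k by simp
      have It: "I t = y t / (k - 1)" unfolding y_def using kk by simp
      show ?thesis unfolding D_def g_def It using alg[OF yR kk, of "f (R t)" "ln (y t)" "ln (R t)"]
        by simp
    qed
    ultimately show ?thesis by simp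
  qed
  have Dle: "D t \<le> 0" for t
  proof -
    have "f (R t) * (y t - R t)^2 / (k - 1) \<ge> 0" using f_pos[rule_format, of "R t"] k
      by (intro divide_nonneg_pos mult_nonneg_nonneg) auto
    moreover have "(y t - R t) * (ln (y t) - ln (R t)) \<ge> 0" using ln_diff_sign ypos Rpos by blast
    ultimately show ?thesis unfolding D_def by simp
  qed
  have Dlt: "D t < 0" if "y t \<noteq> R t" for t
  proof -
    have "f (R t) * (y t - R t)^2 / (k - 1) > 0" using f_pos[rule_format, of "R t"] k that
      by (intro divide_pos_pos mult_pos_pos) auto
    moreover have "(y t - R t) * (ln (y t) - ln (R t)) \<ge> 0" using ln_diff_sign ypos Rpos by blast
    ultimately show ?thesis unfolding D_def by simp
  qed
  have Vper: "V (t + T) = V t" for t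
    unfolding V_def y_def using per by simp
  have yR: "y t = R t" for t
  proof (rule ccontr)
    assume "y t \<noteq> R t"
    then have "D t < 0" by (rule Dlt)
    from DERIV_neg_dec_right[OF dV[of t] this] obtain d where d: "d > 0"
      and dd: "\<And>h. h > 0 \<Longrightarrow> h < d \<Longrightarrow> V t > V (t + h)" by blast
    define h where "h = min (d/2) T"
    have h: "h > 0" "h < d" "h \<le> T" using d T unfolding h_def by auto
    have "V (t + h) \<ge> V (t + T)"
      by (rule DERIV_nonpos_imp_nonincreasing) (use h dV Dle in auto)
    with dd[OF h(1,2)] Vper[of t] show False by simp
  qed
  have "\<forall>x. (R has_real_derivative 0) (at x)" using dR' yR by (metis diff_self)
  then have Rc: "R t = R 0" for t using DERIV_isconst_all by blast
  have "I t = R 0 / (k - 1)" for t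
    using yR[of t] Rc[of t] k unfolding y_def by (simp add: field_simps)
  with Rc nc show False by blast
qed

end
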